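(* Let $g=\sum_{\alpha\in[0,1)}m(\alpha)[\alpha]$ be an effective divisor on $[0,1)$ of degree $r\geq1$. Then the minimal number $T(g)$, over all arrangements $a_1,\ldots,a_r$ of $g$, of indices $t\in\{1,\ldots,r\}$ with $a_t\geq a_{t+1}$ (indices modulo $r$, $a_{r+1}=a_1$) equals the maximal multiplicity: $T(g)=\max_\alpha m(\alpha)$.
   Context: An arrangement of $g$ is a sequence $a_1,\ldots,a_r\in[0,1)$ in which each $\alpha$ appears exactly $m(\alpha)$ times. *)

theory Defs
  imports Complex_Main "HOL-Library.Multiset"
begin

text \<open>An effective divisor g on [0,1) is a finite multiset of reals in [0,1);
  m(alpha) = count g alpha, degree = size g.\<close>
definition effective_divisor_01 :: "real multiset \<Rightarrow> bool" where
  "effective_divisor_01 g \<longleftrightarrow> set_mset g \<subseteq> {0..<1}"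

text \<open>An arrangement of g: a sequence a_1..a_r (list, 0-indexed) in which each
  alpha occurs exactly m(alpha) times.\<close>
definition arrangement :: "real multiset \<Rightarrow> real list \<Rightarrow> bool" where
  "arrangement g a \<longleftrightarrow> (\<forall>\<alpha>. count (mset a) \<alpha> = count g \<alpha>)"

definition cyclic_descents :: "real list \<Rightarrow> nat" where
  "cyclic_descents a = card {t. t < length a \<and> a ! t \<ge> a ! ((t + 1) mod length a)}"

definition T :: "real multiset \<Rightarrow> nat" where
  "T g = Min {cyclic_descents a | a. arrangement g a}"

end

theory Submission
  imports Defs
begin

lemma card_as_sum: "card {t. t < (r::nat) \<and> P t} = (\<Sum>t<r. if P t then 1 else 0::nat)"
proof -
  have "{t. t < r \<and> P t} = {t \<in> {..<r}. P t}" by auto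
  moreover have "card {t \<in> {..<r}. P t} = (\<Sum>t\<in>{t \<in> {..<r}. P t}. 1::nat)"
    by (rule card_eq_sum)
  moreover have "(\<Sum>t\<in>{t \<in> {..<r}. P t}. 1::nat) = (\<Sum>t<r. if P t then 1 else 0::nat)"
    by (rule sum.inter_filter) simp
  ultimately show ?thesis by simp
qed

lemma shift_sum:
  assumes "0 < r"
  shows "(\<Sum>t<r. (f::nat\<Rightarrow>nat) ((t+1) mod r)) = (\<Sum>t<r. f t)"
proof -
  obtain m where m: "r = Suc m" using assms by (cases r) auto
  have "(\<Sum>t<r. f ((t+1) mod r)) = (\<Sum>t<m. f ((t+1) mod r)) + f 0"
    using m by simp
  also have "(\<Sum>t<m. f ((t+1) mod r)) = (\<Sum>t<m. f (Suc t))"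
    by (rule sum.cong) (auto simp: m)
  moreover have "(\<Sum>t<r. f t) = f 0 + (\<Sum>t<m. f (Suc t))"
    unfolding m by (rule sum.lessThan_Suc_shift)
  ultimately show ?thesis by simp
qed

lemma count_as_sum: "count (mset a) x = (\<Sum>t<length a. if a ! t = x then 1 else 0::nat)"
proof -
  have "count (mset a) x = length (filter (\<lambda>y. x = y) a)"
    by (metis length_replicate replicate_count_mset_eq_filter_eq)
  also have "\<dots> = card {t. t < length a \<and> x = a ! t}" by (rule length_filter_conv_card)
  also have "\<dots> = (\<Sum>t<length a. if a ! t = x then 1 else 0::nat)"
    by (subst card_as_sum) (rule sum.cong, auto)
  finally show ?thesis .
qed

lemma lower:
  assumes "a \<noteq> []"
  shows "count (mset a) \<alpha> \<le> cyclic_descents a"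
proof -
  define r where "r = length a"
  have r: "0 < r" using assms r_def by simp
  define n where "n t = (t+1) mod r" for t
  let ?A = "\<Sum>t<r. if a!(n t) = \<alpha> \<and> a!t \<ge> \<alpha> then 1 else 0::nat"
  let ?C = "\<Sum>t<r. if a!(n t) = \<alpha> \<and> a!t < \<alpha> then 1 else 0::nat"
  let ?C' = "\<Sum>t<r. if a!(n t) \<ge> \<alpha> \<and> a!t < \<alpha> then 1 else 0::nat"
  let ?B = "\<Sum>t<r. if a!(n t) < \<alpha> \<and> a!t \<ge> \<alpha> then 1 else 0::nat"
  let ?D = "\<Sum>t<r. if a!(n t) \<ge> \<alpha> \<and> a!t \<ge> \<alpha> then 1 else 0::nat"
  have "count (mset a) \<alpha> = (\<Sum>t<r. if a ! t = \<alpha> then 1 else 0::nat)"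
    by (simp add: count_as_sum r_def)
  also have "\<dots> = (\<Sum>t<r. if a ! (n t) = \<alpha> then 1 else 0::nat)"
    unfolding n_def using shift_sum[OF r, of "\<lambda>t. if a ! t = \<alpha> then 1 else 0"] by simp
  also have "\<dots> = ?A + ?C" by (subst sum.distrib[symmetric]) (rule sum.cong, auto)
  finally have e1: "count (mset a) \<alpha> = ?A + ?C" .
  have e2: "?C \<le> ?C'" by (rule sum_mono) auto
  have "(\<Sum>t<r. if a ! (n t) \<ge> \<alpha> then 1 else 0::nat) = (\<Sum>t<r. if a ! t \<ge> \<alpha> then 1 else 0::nat)"
    unfolding n_def using shift_sum[OF r, of "\<lambda>t. if a ! t \<ge> \<alpha> then 1 else 0"] by simp
  moreover have "(\<Sum>t<r. if a ! (n t) \<ge> \<alpha> then 1 else 0::nat) = ?D + ?C'"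
    by (subst sum.distrib[symmetric]) (rule sum.cong, auto)
  moreover have "(\<Sum>t<r. if a ! t \<ge> \<alpha> then 1 else 0::nat) = ?D + ?B"
    by (subst sum.distrib[symmetric]) (rule sum.cong, auto)
  ultimately have e3: "?C' = ?B" by simp
  have "cyclic_descents a = (\<Sum>t<r. if a ! t \<ge> a ! (n t) then 1 else 0::nat)"
    unfolding cyclic_descents_def n_def r_def by (rule card_as_sum)
  also have "\<dots> \<ge> ?A + ?B"
    by (subst sum.distrib[symmetric]) (rule sum_mono, auto)
  finally show ?thesis using e1 e2 e3 by linarith
qed

definition lin_desc :: "real list \<Rightarrow> nat" where
  "lin_desc a = card {t. Suc t < length a \<and> a ! t \<ge> a ! Suc t}"

lemma fin_ld: "finite {t. Suc t < length a \<and> a ! t \<ge> a ! Suc t}"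
  by (rule finite_subset[of _ "{..<length a}"]) auto

lemma cd_le: "cyclic_descents a \<le> lin_desc a + 1"
proof -
  have "{t. t < length a \<and> a ! t \<ge> a ! ((t + 1) mod length a)}
        \<subseteq> {t. Suc t < length a \<and> a ! t \<ge> a ! Suc t} \<union> {length a - 1}"
  proof
    fix t assume "t \<in> {t. t < length a \<and> a ! t \<ge> a ! ((t + 1) mod length a)}"
    then show "t \<in> {t. Suc t < length a \<and> a ! t \<ge> a ! Suc t} \<union> {length a - 1}"
      by (cases "Suc t < length a") auto
  qed
  then have "cyclic_descents a \<le> card ({t. Suc t < length a \<and> a ! t \<ge> a ! Suc t} \<union> {length a - 1})"
    unfolding cyclic_descents_def by (rule card_mono[rotated]) (auto simp: fin_ld)
  also have "\<dots> \<le> lin_desc a + 1" unfolding lin_desc_def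
    using card_Un_le[of "{t. Suc t < length a \<and> a ! t \<ge> a ! Suc t}" "{length a - 1}"] by simp
  finally show ?thesis .
qed

lemma lin_append: "lin_desc (xs @ ys) \<le> lin_desc xs + lin_desc ys + 1"
proof -
  let ?X = "{t. Suc t < length xs \<and> xs ! t \<ge> xs ! Suc t}"
  let ?Y = "{t. Suc t < length ys \<and> ys ! t \<ge> ys ! Suc t}"
  have "{t. Suc t < length (xs@ys) \<and> (xs@ys) ! t \<ge> (xs@ys) ! Suc t}
        \<subseteq> ?X \<union> {length xs - 1} \<union> (\<lambda>t. t + length xs) ` ?Y"
  proof
    fix t assume t: "t \<in> {t. Suc t < length (xs@ys) \<and> (xs@ys) ! t \<ge> (xs@ys) ! Suc t}"
    show "t \<in> ?X \<union> {length xs - 1} \<union> (\<lambda>t. t + length xs) ` ?Y"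
    proof (cases "Suc t < length xs")
      case True then show ?thesis using t by (auto simp: nth_append)
    next
      case False
      show ?thesis
      proof (cases "Suc t = length xs")
        case True then show ?thesis by auto
      next
        case False': False
        then have "t \<ge> length xs" using False by simp
        then have "t = (t - length xs) + length xs" "(t - length xs) \<in> ?Y"
          using t by (auto simp: nth_append Suc_diff_le)
        then show ?thesis by blast
      qed
    qed
  qed
  then have "lin_desc (xs @ ys) \<le> card (?X \<union> {length xs - 1} \<union> (\<lambda>t. t + length xs) ` ?Y)"
    unfolding lin_desc_def by (rule card_mono[rotated]) (auto simp: fin_ld)
  also have "\<dots> \<le> card ?X + card {length xs - 1} + card ((\<lambda>t. t + length xs) ` ?Y)"
    by (meson card_Un_le add_le_mono le_refl order_trans)
  also have "\<dots> \<le> lin_desc xs + lin_desc ys + 1"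
    unfolding lin_desc_def using card_image_le[OF fin_ld[of ys], of "\<lambda>t. t + length xs"] by simp
  finally show ?thesis .
qed

lemma lin_sorted:
  assumes "sorted_wrt (<) xs" shows "lin_desc xs = 0"
proof -
  have h: "\<not> (xs ! t \<ge> xs ! Suc t)" if "Suc t < length xs" for t
    using sorted_wrt_nth_less[OF assms, of t "Suc t"] that by simp
  have "{t. Suc t < length xs \<and> xs ! t \<ge> xs ! Suc t} = {}" using h by blast
  then show ?thesis unfolding lin_desc_def by (metis card.empty)
qed

lemma lin_concat: "\<forall>L\<in>set Ls. sorted_wrt (<) L \<Longrightarrow> lin_desc (concat Ls) \<le> length Ls - 1"
proof (induction Ls)
  case Nil then show ?case by (simp add: lin_desc_def)
next
  case (Cons L Ls)
  show ?case
  proof (cases "Ls = []")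
    case True then show ?thesis using Cons by (simp add: lin_sorted)
  next
    case False
    have "lin_desc (concat (L # Ls)) \<le> lin_desc L + lin_desc (concat Ls) + 1"
      using lin_append by simp
    also have "\<dots> \<le> 0 + (length Ls - 1) + 1" using Cons by (simp add: lin_sorted)
    finally show ?thesis using False by (cases Ls) auto
  qed
qed

lemma count_concat: "count (mset (concat (map F [0..<M]))) x = (\<Sum>k<M. count (mset (F k)) x)"
  by (induction M) auto

lemma sum_ind: "(\<Sum>k<M. if Suc k \<le> c then 1 else 0::nat) = min c M"
  by (induction M) auto

theorem lemma6p6:
  fixes g :: "real multiset"
  assumes "effective_divisor_01 g"
    and "size g \<ge> 1"
  shows "T g = Max {count g \<alpha> | \<alpha>. \<alpha> \<in> {0..<1}}"
proof -
  let ?S = "{count g \<alpha> | \<alpha>. \<alpha> \<in> {0..<1}}"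
  define M where "M = Max ?S"
  have sub: "set_mset g \<subseteq> {0..<1}" using assms(1) by (simp add: effective_divisor_01_def)
  have Sfin: "finite ?S"
    by (rule finite_subset[of _ "{0..size g}"]) (auto simp: count_le_size)
  have Sne: "?S \<noteq> {}" by auto
  obtain x0 where x0: "x0 \<in># g" using assms(2) by (metis multiset_nonemptyE not_one_le_zero size_empty)
  have cle: "count g x \<le> M" for x
  proof (cases "x \<in> {0..<1}")
    case True then show ?thesis unfolding M_def using Sfin by (intro Max_ge) auto
  next
    case False then have "x \<notin># g" using sub by auto
    then show ?thesis by (simp add: not_in_iff)
  qed
  have M1: "M \<ge> 1" using cle[of x0] x0 by (metis One_nat_def count_greater_zero_iff dual_order.trans less_eq_Suc_le)
  have low: "M \<le> cyclic_descents a" if "arrangement g a" for a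
  proof -
    have "M \<in> ?S" unfolding M_def using Sfin Sne by (rule Max_in)
    then obtain \<alpha> where "M = count g \<alpha>" by auto
    also have "\<dots> = count (mset a) \<alpha>" using that by (simp add: arrangement_def)
    also have "\<dots> \<le> cyclic_descents a"
    proof (rule lower)
      have "mset a = g" using that by (simp add: arrangement_def multiset_eq_iff)
      then show "a \<noteq> []" using assms(2) by auto
    qed
    finally show ?thesis .
  qed
  define F where "F k = sorted_list_of_set {x. Suc k \<le> count g x}" for k
  define a where "a = concat (map F [0..<M])"
  have finF: "finite {x. Suc k \<le> count g x}" for k
  proof (rule finite_subset[of _ "set_mset g"])
    show "{x. Suc k \<le> count g x} \<subseteq> set_mset g"
    proof
      fix x assume "x \<in> {x. Suc k \<le> count g x}"
      then have "Suc k \<le> count g x" by simp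
      then have "0 < count g x" by linarith
      then show "x \<in> set_mset g" by (meson count_greater_zero_iff)
    qed
  qed simp
  have cF: "count (mset (F k)) x = (if Suc k \<le> count g x then 1 else 0)" for k x
  proof -
    have "distinct (F k)" unfolding F_def by simp
    then have "count (mset (F k)) x = (if x \<in> set (F k) then 1 else 0)"
      using distinct_count_atmost_1 by metis
    moreover have "set (F k) = {x. Suc k \<le> count g x}" unfolding F_def using finF[of k] by simp
    ultimately show ?thesis by simp
  qed
  have arr: "arrangement g a"
    unfolding arrangement_def a_def count_concat cF sum_ind using cle by (simp add: min_absorb1)
  have "cyclic_descents a \<le> lin_desc a + 1" by (rule cd_le)
  also have "lin_desc a \<le> M - 1" unfolding a_def
    using lin_concat[of "map F [0..<M]"] by (simp add: F_def)
  finally have "cyclic_descents a \<le> M" using M1 by linarith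
  then have ca: "cyclic_descents a = M" using low[OF arr] by simp
  have Xfin: "finite {cyclic_descents a | a. arrangement g a}"
  proof (rule finite_subset[of _ "{0..size g}"])
    show "{cyclic_descents a | a. arrangement g a} \<subseteq> {0..size g}"
    proof
      fix y assume "y \<in> {cyclic_descents a | a. arrangement g a}"
      then obtain b where b: "y = cyclic_descents b" "arrangement g b" by auto
      have "mset b = g" using b(2) by (simp add: arrangement_def multiset_eq_iff)
      then have "length b = size g" by (metis size_mset)
      moreover have "cyclic_descents b \<le> length b" unfolding cyclic_descents_def
        by (rule order_trans[OF card_mono[of "{..<length b}"]]) auto
      ultimately show "y \<in> {0..size g}" using b by simp
    qed
  qed simp
  have "T g = M" unfolding T_def
    by (rule Min_eqI[OF Xfin]) (use low arr ca in auto)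
  then show ?thesis by (simp add: M_def)
qed

end
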